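(* Let $\Delta\ge3$ and $k\ge2$, and let $X$ be the $k\times k$ symmetric tridiagonal matrix with diagonal entries $0,\dots,0,2$ (zeros in positions $1,\dots,k-1$ and $2$ in position $k$), off-diagonal entries in positions $(j,j+1),(j+1,j)$ equal to $\sqrt{\Delta-1}$ for $1\le j\le k-2$, and equal to $\sqrt{\Delta-2}$ for $j=k-1$. If $\Delta\ge4$, or $\Delta=3$ and $k\ge4$, then \[ \rho(X)<2\sqrt{\Delta-1}\cos\frac{\pi}{2k+1}, \] where $\rho(X)$ is the spectral radius of $X$. *)

theory Defs
  imports Complex_Main "Jordan_Normal_Form.Spectral_Radius"
begin

definition tridiagX :: "nat \<Rightarrow> nat \<Rightarrow> complex mat" where
  "tridiagX \<Delta> k = mat k k (\<lambda>(i, j).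
     if i = j then (if i = k - 1 then 2 else 0)
     else if i = j + 1 \<or> j = i + 1 then
       (if min i j < k - 2 then complex_of_real (sqrt (real \<Delta> - 1))
        else complex_of_real (sqrt (real \<Delta> - 2)))
     else 0)"

end

theory Submission
  imports Defs
begin

lemma avg_lt: "(y::real) < x \<Longrightarrow> (x + y)/2 < x" by simp
lemma avg_gt: "(y::real) < x \<Longrightarrow> y < (x + y)/2" by simp

lemma pi_le_7_2: "pi \<le> 7/2"
proof -
  obtain t where t: "cos (7/4::real) = (\<Sum>m<6. cos_coeff m * (7/4) ^ m) + (cos(t + 1/2 * real 6 * pi) / fact 6) * (7/4) ^ 6"
    using Maclaurin_cos_expansion[of "7/4::real" 6] by blast
  have c: "cos_coeff 0 = 1" "cos_coeff 1 = 0" "cos_coeff 2 = -1/2" "cos_coeff 3 = 0" "cos_coeff 4 = 1/24" "cos_coeff 5 = 0"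
    by (simp_all add: cos_coeff_def fact_numeral)
  have e: "(\<Sum>m<6. cos_coeff m * (7/4::real) ^ m) = cos_coeff 0 + cos_coeff 1 * (7/4) + cos_coeff 2 * (7/4)^2 + cos_coeff 3 * (7/4)^3 + cos_coeff 4 * (7/4)^4 + cos_coeff 5 * (7/4)^5"
    by (simp add: numeral_eq_Suc lessThan_Suc del: sum.lessThan_Suc)
  have s: "(\<Sum>m<6. cos_coeff m * (7/4::real) ^ m) = 1 - (7/4)^2/2 + (7/4)^4/24"
    unfolding e c by simp
  have t': "cos (7/4::real) = 1 - 49/32 + 2401/6144 + cos (t + 3*pi) * (117649/2949120)"
    using t s by (simp add: fact_numeral power_divide)
  have "cos (t + 3*pi) \<le> 1" by (rule cos_le_one)
  hence "cos (7/4::real) < 0" using t' by linarith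
  show ?thesis
  proof (rule ccontr)
    assume "\<not> ?thesis"
    hence "7/4 < pi/2" by simp
    from cos_gt_zero_pi[of "7/4"] this \<open>cos (7/4) < 0\<close> show False by simp
  qed
qed

lemma key_trig:
  fixes s u :: real
  assumes s: "s \<ge> 1" and u0: "0 \<le> u" and su: "2 * sin u < s - 1" and u3: "3 * u < pi/2"
  shows "(s^2 - 1) * cos (3*u) < s * (2*s*cos (2*u) - 2) * cos u"
proof -
  have cu: "cos u > 0" using u0 u3 by (intro cos_gt_zero_pi) auto
  have sn: "sin u \<ge> 0" using u0 u3 by (intro sin_ge_zero) auto
  have id: "s * (2*s*cos (2*u) - 2) * cos u - (s^2 - 1) * cos (3*u) = cos u * ((s-1)^2 - 4 * (sin u)^2)"
  proof -
    have "(sin u)^2 = 1 - (cos u)^2" using sin_cos_squared_add[of u] by linarith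
    hence "cos u * ((s-1)^2 - 4 * (sin u)^2) = cos u * ((s-1)^2 - 4 * (1 - (cos u)^2))" by simp
    also have "\<dots> = s * (2*s*cos (2*u) - 2) * cos u - (s^2 - 1) * cos (3*u)"
      unfolding cos_treble_cos cos_double_cos by (simp add: algebra_simps power2_eq_square power3_eq_cube)
    finally show ?thesis by simp
  qed
  have "(2 * sin u)^2 < (s-1)^2" using sn su by (intro power_strict_mono) auto
  hence "(s-1)^2 - 4 * (sin u)^2 > 0" by (simp add: power_mult_distrib)
  hence "cos u * ((s-1)^2 - 4 * (sin u)^2) > 0" using cu by simp
  thus ?thesis using id by linarith
qed

lemma tri_sum:
  fixes f :: "nat \<Rightarrow> real"
  assumes i: "i < n" and z: "\<And>j. j < n \<Longrightarrow> j \<noteq> i \<Longrightarrow> j+1 \<noteq> i \<Longrightarrow> j \<noteq> i+1 \<Longrightarrow> f j = 0"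
  shows "(\<Sum>j\<in>{0..<n}. f j) = (if 0 < i then f (i-1) else 0) + f i + (if i+1 < n then f (i+1) else 0)"
proof -
  define S where "S = {i} \<union> (if 0 < i then {i-1} else {}) \<union> (if i+1 < n then {i+1} else {})"
  have sub: "S \<subseteq> {0..<n}" using i unfolding S_def by auto
  have "(\<Sum>j\<in>{0..<n}. f j) = (\<Sum>j\<in>S. f j)"
    by (rule sum.mono_neutral_right[OF _ sub]) (auto simp: S_def intro!: z)
  also have "\<dots> = (if 0 < i then f (i-1) else 0) + f i + (if i+1 < n then f (i+1) else 0)"
    unfolding S_def by (cases "0 < i"; cases "i+1 < n") auto
  finally show ?thesis .
qed

lemma cw_bound:
  fixes a :: "nat \<Rightarrow> nat \<Rightarrow> real" and v :: "nat \<Rightarrow> real" and l :: real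
  assumes n: "n > 0"
  and nonneg: "\<And>i j. i < n \<Longrightarrow> j < n \<Longrightarrow> a i j \<ge> 0"
  and vpos: "\<And>i. i < n \<Longrightarrow> v i > 0"
  and row: "\<And>i. i < n \<Longrightarrow> (\<Sum>j\<in>{0..<n}. a i j * v j) \<le> l * v i"
  and last: "(\<Sum>j\<in>{0..<n}. a (n-1) j * v j) < l * v (n-1)"
  and conn: "\<And>i. i+1 < n \<Longrightarrow> a i (i+1) > 0"
  and ev: "eigenvector (mat n n (\<lambda>(i,j). complex_of_real (a i j))) x \<mu>"
  shows "cmod \<mu> < l"
proof (rule ccontr)
  assume "\<not> cmod \<mu> < l"
  hence ml: "l \<le> cmod \<mu>" by simp
  define A where "A = mat n n (\<lambda>(i,j). complex_of_real (a i j))"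
  from ev have xc: "x \<in> carrier_vec n" and xnz: "x \<noteq> 0\<^sub>v n" and eq: "A *\<^sub>v x = \<mu> \<cdot>\<^sub>v x"
    unfolding eigenvector_def A_def by auto
  have comp: "\<mu> * x $ i = (\<Sum>j\<in>{0..<n}. complex_of_real (a i j) * x $ j)" if "i < n" for i
  proof -
    have "(A *\<^sub>v x) $ i = (\<mu> \<cdot>\<^sub>v x) $ i" using eq by simp
    thus ?thesis using that xc unfolding A_def by (auto simp: scalar_prod_def row_def)
  qed
  define r where "r i = cmod (x $ i) / v i" for i
  define t where "t = Max (r ` {0..<n})"
  have rt: "r i \<le> t" if "i < n" for i unfolding t_def using that by auto
  obtain i0 where i0: "i0 < n" "r i0 = t"
  proof -
    have "t \<in> r ` {0..<n}" unfolding t_def using n by (intro Max_in) auto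
    thus ?thesis using that by auto
  qed
  have xle: "cmod (x $ j) \<le> t * v j" if "j < n" for j
    using rt[OF that] vpos[OF that] unfolding r_def by (simp add: divide_le_eq)
  obtain j0 where j0: "j0 < n" "x $ j0 \<noteq> 0"
    using xnz xc by (metis carrier_vecD eq_vecI index_zero_vec(1,2))
  have tpos: "t > 0"
  proof -
    have "r j0 > 0" unfolding r_def using j0 vpos[OF j0(1)] by simp
    thus ?thesis using rt[OF j0(1)] by simp
  qed
  have key: "(\<Sum>j\<in>{0..<n}. a m j * (t * v j - cmod (x $ j))) = 0 \<and>
             (\<Sum>j\<in>{0..<n}. a m j * v j) = l * v m"
    if m: "m < n" and mt: "cmod (x $ m) = t * v m" for m
  proof -
    have "cmod \<mu> * cmod (x $ m) = cmod (\<Sum>j\<in>{0..<n}. complex_of_real (a m j) * x $ j)"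
      using comp[OF m] by (metis norm_mult)
    also have "\<dots> \<le> (\<Sum>j\<in>{0..<n}. cmod (complex_of_real (a m j) * x $ j))"
      by (rule norm_sum)
    also have "\<dots> = (\<Sum>j\<in>{0..<n}. a m j * cmod (x $ j))"
      using nonneg[OF m] by (intro sum.cong) (auto simp: norm_mult)
    finally have s1: "cmod \<mu> * cmod (x $ m) \<le> (\<Sum>j\<in>{0..<n}. a m j * cmod (x $ j))" .
    have s2: "(\<Sum>j\<in>{0..<n}. a m j * cmod (x $ j)) \<le> (\<Sum>j\<in>{0..<n}. a m j * (t * v j))"
      using nonneg[OF m] xle by (intro sum_mono mult_left_mono) auto
    have s3: "(\<Sum>j\<in>{0..<n}. a m j * (t * v j)) = t * (\<Sum>j\<in>{0..<n}. a m j * v j)"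
      by (simp add: sum_distrib_left algebra_simps)
    have s4: "t * (\<Sum>j\<in>{0..<n}. a m j * v j) \<le> t * (l * v m)"
      using row[OF m] tpos by simp
    have s5: "t * (l * v m) \<le> cmod \<mu> * cmod (x $ m)"
      using ml tpos vpos[OF m] mt by (simp add: mult_right_mono)
    have e1: "(\<Sum>j\<in>{0..<n}. a m j * cmod (x $ j)) = (\<Sum>j\<in>{0..<n}. a m j * (t * v j))"
      using s1 s2 s3 s4 s5 by linarith
    have "(\<Sum>j\<in>{0..<n}. a m j * (t * v j - cmod (x $ j))) =
          (\<Sum>j\<in>{0..<n}. a m j * (t * v j)) - (\<Sum>j\<in>{0..<n}. a m j * cmod (x $ j))"
      by (simp add: sum_subtractf algebra_simps)
    hence "(\<Sum>j\<in>{0..<n}. a m j * (t * v j - cmod (x $ j))) = 0" using e1 by simp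
    moreover have "t * (\<Sum>j\<in>{0..<n}. a m j * v j) = t * (l * v m)"
      using s1 s2 s3 s4 s5 by linarith
    ultimately show ?thesis using tpos by simp
  qed
  have propag: "cmod (x $ (i0 + d)) = t * v (i0 + d)" if "i0 + d < n" for d
    using that
  proof (induction d)
    case 0
    then show ?case using i0 vpos[of i0] unfolding r_def by (simp add: field_simps)
  next
    case (Suc d)
    let ?m = "i0 + d"
    have m: "?m < n" using Suc.prems by simp
    have IH: "cmod (x $ ?m) = t * v ?m" using Suc.IH m by simp
    have z: "(\<Sum>j\<in>{0..<n}. a ?m j * (t * v j - cmod (x $ j))) = 0"
      using key[OF m IH] by simp
    have "\<forall>j\<in>{0..<n}. a ?m j * (t * v j - cmod (x $ j)) = 0"
      using z nonneg[OF m] xle by (subst sum_nonneg_eq_0_iff[symmetric]) auto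
    hence "a ?m (?m+1) * (t * v (?m+1) - cmod (x $ (?m+1))) = 0"
      using Suc.prems by auto
    moreover have "a ?m (?m+1) > 0" using conn Suc.prems by simp
    ultimately show ?case by simp
  qed
  have "cmod (x $ (n-1)) = t * v (n-1)" using propag[of "n - 1 - i0"] i0 by simp
  from key[OF _ this] n last show False by simp
qed

theorem mainTheorem9:
  fixes \<Delta> k :: nat
  assumes "\<Delta> \<ge> 3" and "k \<ge> 2"
    and "\<Delta> \<ge> 4 \<or> (\<Delta> = 3 \<and> k \<ge> 4)"
  shows "spectral_radius (tridiagX \<Delta> k) < 2 * sqrt (real \<Delta> - 1) * cos (pi / (2 * real k + 1))"
proof -
  note D = assms(1) and K = assms(2) and C = assms(3)
  define s where "s = sqrt (real \<Delta> - 1)"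
  define r where "r = sqrt (real \<Delta> - 2)"
  define \<theta> where "\<theta> = pi / (2 * real k + 1)"
  define u where "u = \<theta> / 2"
  define l where "l = 2 * s * cos \<theta>"
  have r2: "r^2 = s^2 - 1" using D unfolding r_def s_def by simp
  have s1: "s \<ge> 1" using D unfolding s_def by simp
  have r1: "r \<ge> 1" using D unfolding r_def by simp
  have thpos: "\<theta> > 0" unfolding \<theta>_def by simp
  have u0: "u \<ge> 0" using thpos unfolding u_def by simp
  have pi72: "pi \<le> 7/2" by (rule pi_le_7_2)
  have uk: "u = pi / (4 * real k + 2)" unfolding u_def \<theta>_def by (simp add: field_simps)
  have u3: "3 * u < pi/2"
  proof -
    have "3 * u = 3 * pi / (4 * real k + 2)" unfolding uk by simp
    also have "\<dots> \<le> 3 * pi / 10" using K by (intro divide_left_mono) auto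
    also have "\<dots> < pi/2" by simp
    finally show ?thesis .
  qed
  have su: "2 * sin u < s - 1"
  proof -
    have "2 * sin u \<le> 2 * u" using sin_x_le_x[OF u0] by simp
    moreover have "2 * u < s - 1"
      using C
    proof
      assume "\<Delta> \<ge> 4"
      hence "sqrt 3 \<le> s" unfolding s_def by simp
      moreover have "173/100 \<le> sqrt (3::real)" by (rule real_le_rsqrt) (simp add: power2_eq_square)
      moreover have "2 * u \<le> 2 * pi / 10"
      proof -
        have "2 * u = 2 * pi / (4 * real k + 2)" unfolding uk by simp
        also have "\<dots> \<le> 2 * pi / 10" using K by (intro divide_left_mono) auto
        finally show ?thesis .
      qed
      ultimately show ?thesis using pi72 by linarith
    next
      assume h: "\<Delta> = 3 \<and> 4 \<le> k"
      hence "s = sqrt 2" unfolding s_def by simp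
      moreover have "141/100 \<le> sqrt (2::real)" by (rule real_le_rsqrt) (simp add: power2_eq_square)
      moreover have "2 * u \<le> 2 * pi / 18"
      proof -
        have "2 * u = 2 * pi / (4 * real k + 2)" unfolding uk by simp
        also have "\<dots> \<le> 2 * pi / 18" using h by (intro divide_left_mono) auto
        finally show ?thesis .
      qed
      ultimately show ?thesis using pi72 by linarith
    qed
    ultimately show ?thesis by linarith
  qed
  have kt: "(s^2 - 1) * cos (3*u) < s * (2*s*cos (2*u) - 2) * cos u"
    by (rule key_trig[OF s1 u0 su u3])
  have th2: "\<theta> = 2 * u" unfolding u_def by simp
  have kt': "r^2 * cos (3*u) < s * (l - 2) * cos u"
    using kt unfolding r2 l_def th2 by (simp add: algebra_simps)
  have cu: "cos u > 0" using u0 u3 by (intro cos_gt_zero_pi) auto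
  have c3: "cos (3*u) > 0" using u0 u3 by (intro cos_gt_zero_pi) auto
  have l2: "l > 2"
  proof -
    have "0 < r^2 * cos (3*u)" using r1 c3 by simp
    hence "0 < s * (l - 2) * cos u" using kt' by linarith
    hence "0 < (l - 2) * (s * cos u)" by (simp add: algebra_simps)
    moreover have "s * cos u > 0" using s1 cu by simp
    ultimately show ?thesis by (simp add: zero_less_mult_iff)
  qed
  have ksin: "sin (real k * \<theta>) = cos u"
  proof -
    have "real k * \<theta> = pi/2 - u" unfolding u_def \<theta>_def by (simp add: field_simps)
    thus ?thesis by (simp add: sin_cos_eq)
  qed
  have k1sin: "sin (real (k-1) * \<theta>) = cos (3*u)"
  proof -
    have "real (k-1) * \<theta> = pi/2 - 3*u" using K unfolding u_def \<theta>_def by (simp add: of_nat_diff field_simps)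
    thus ?thesis by (simp add: sin_cos_eq)
  qed
  define tt where "tt = (s * cos u / r + r * cos (3*u) / (l - 2)) / 2"
  have ineq: "r * cos (3*u) / (l - 2) < s * cos u / r"
    using kt' l2 r1 by (simp add: divide_simps power2_eq_square algebra_simps)
  have tt1: "r * tt < s * cos u"
  proof -
    have "tt < s * cos u / r" unfolding tt_def by (rule avg_lt[OF ineq])
    thus ?thesis using r1 by (simp add: pos_less_divide_eq mult.commute)
  qed
  have tt2: "r * cos (3*u) < (l - 2) * tt"
  proof -
    have "r * cos (3*u) / (l - 2) < tt" unfolding tt_def by (rule avg_gt[OF ineq])
    thus ?thesis using l2 by (simp add: pos_divide_less_eq mult.commute)
  qed
  have ttpos: "tt > 0" using tt2 r1 c3 l2
    by (smt (verit) mult_pos_pos mult_nonneg_nonpos)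
  define a where "a i j = (if i = j then (if i = k - 1 then 2 else 0)
     else if i = j + 1 \<or> j = i + 1 then (if min i j < k - 2 then s else r) else 0)" for i j
  define v where "v i = (if i < k - 1 then sin (real (i+1) * \<theta>) else tt)" for i
  have Xeq: "tridiagX \<Delta> k = mat k k (\<lambda>(i,j). complex_of_real (a i j))"
    unfolding tridiagX_def a_def s_def r_def
    by (intro cong[of "mat k k", OF refl]) (auto simp: fun_eq_iff)
  have sinpos: "sin (real (i+1) * \<theta>) > 0" if "i < k - 1" for i
  proof (rule sin_gt_zero)
    show "0 < real (i+1) * \<theta>" using thpos by simp
    have "real (i+1) < 2 * real k + 1" using that by linarith
    hence "real (i+1) * \<theta> < (2 * real k + 1) * \<theta>" using thpos by (intro mult_strict_right_mono) auto
    thus "real (i+1) * \<theta> < pi" unfolding \<theta>_def by simp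
  qed
  have vpos: "v i > 0" if "i < k" for i using sinpos ttpos unfolding v_def by auto
  have rowsum: "(\<Sum>j\<in>{0..<k}. a m j * v j) = (if 0 < m then a m (m-1) * v (m-1) else 0) + a m m * v m
      + (if m+1 < k then a m (m+1) * v (m+1) else 0)" if "m < k" for m
    by (rule tri_sum[OF that]) (auto simp: a_def)
  have sinrec: "sin (real m * \<theta>) + sin (real (m+2) * \<theta>) = 2 * cos \<theta> * sin (real (m+1) * \<theta>)" for m
  proof -
    have e1: "real m * \<theta> = real (m+1) * \<theta> - \<theta>" by (simp add: algebra_simps)
    have e2: "real (m+2) * \<theta> = real (m+1) * \<theta> + \<theta>" by (simp add: algebra_simps)
    show ?thesis unfolding e1 e2 sin_add sin_diff by (simp add: algebra_simps)
  qed
  have rowint: "(\<Sum>j\<in>{0..<k}. a m j * v j) = l * v m" if "m + 2 < k" for m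
  proof -
    have mk: "m < k" using that by simp
    have "(\<Sum>j\<in>{0..<k}. a m j * v j) = s * sin (real m * \<theta>) + s * sin (real (m+2) * \<theta>)"
      using that unfolding rowsum[OF mk] by (cases m) (auto simp: a_def v_def)
    also have "\<dots> = s * (2 * cos \<theta> * sin (real (m+1) * \<theta>))"
      by (simp only: distrib_left[symmetric] sinrec)
    also have "\<dots> = l * v m"
    proof -
      have "m < k - 1" using that by simp
      thus ?thesis unfolding v_def l_def by simp
    qed
    finally show ?thesis .
  qed
  have kk2: "k - 2 < k" and kk1: "k - 1 < k" using K by auto
  have rowk2: "(\<Sum>j\<in>{0..<k}. a (k-2) j * v j) < l * v (k-2)"
  proof -
    have "(\<Sum>j\<in>{0..<k}. a (k-2) j * v j) = s * sin (real (k-2) * \<theta>) + r * tt"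
      using K unfolding rowsum[OF kk2] by (cases "k = 2") (auto simp: a_def v_def numeral_eq_Suc)
    also have "\<dots> < s * sin (real (k-2) * \<theta>) + s * sin (real k * \<theta>)" using tt1 ksin by simp
    also have "\<dots> = l * v (k-2)"
    proof -
      have "sin (real (k-2) * \<theta>) + sin (real (k-2+2) * \<theta>) = 2 * cos \<theta> * sin (real (k-2+1) * \<theta>)"
        by (rule sinrec)
      moreover have "k-2+2 = k" "k-2+1 = k-1" "k - 2 < k - 1" using K by auto
      ultimately have e: "sin (real (k-2) * \<theta>) + sin (real k * \<theta>) = 2 * cos \<theta> * sin (real (k-1) * \<theta>)"
        by simp
      have "s * sin (real (k-2) * \<theta>) + s * sin (real k * \<theta>) = s * (2 * cos \<theta> * sin (real (k-1) * \<theta>))"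
        by (simp only: distrib_left[symmetric] e)
      also have "\<dots> = l * v (k-2)"
      proof -
        have h: "k - 2 < k - 1" "k - 2 + 1 = k - 1" using K by auto
        show ?thesis unfolding v_def l_def h(2) using h(1) by simp
      qed
      finally show ?thesis .
    qed
    finally show ?thesis .
  qed
  have rowk1: "(\<Sum>j\<in>{0..<k}. a (k-1) j * v j) < l * v (k-1)"
  proof -
    have "(\<Sum>j\<in>{0..<k}. a (k-1) j * v j) = r * sin (real (k-1) * \<theta>) + 2 * tt"
      using K unfolding rowsum[OF kk1] by (auto simp: a_def v_def)
    also have "\<dots> < l * tt" using tt2 k1sin by (simp add: algebra_simps)
    also have "\<dots> = l * v (k-1)" unfolding v_def by simp
    finally show ?thesis .
  qed
  have rows: "(\<Sum>j\<in>{0..<k}. a m j * v j) \<le> l * v m" if "m < k" for m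
  proof -
    have "m + 2 < k \<or> m = k - 2 \<or> m = k - 1" using that by linarith
    thus ?thesis using rowint rowk2 rowk1 by fastforce
  qed
  have nonneg: "a i j \<ge> 0" for i j using s1 r1 unfolding a_def by auto
  have conn: "a i (i+1) > 0" for i using s1 r1 unfolding a_def by auto
  have Xc: "tridiagX \<Delta> k \<in> carrier_mat k k" unfolding Xeq by simp
  from spectral_radius_mem_max(1)[OF Xc] K obtain \<mu> where
    mu: "\<mu> \<in> spectrum (tridiagX \<Delta> k)" "spectral_radius (tridiagX \<Delta> k) = cmod \<mu>" by auto
  then obtain x where ev: "eigenvector (mat k k (\<lambda>(i,j). complex_of_real (a i j))) x \<mu>"
    unfolding spectrum_def eigenvalue_def Xeq by auto
  have "cmod \<mu> < l"
    by (rule cw_bound[OF _ _ _ rows _ _ ev]) (use K nonneg vpos rowk1 conn in auto)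
  thus ?thesis using mu unfolding l_def s_def \<theta>_def by simp
qed

end
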